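(* Let $\mathcal{P}=(\mathcal{V},\mathcal{L},\ell_0,\mathcal{T})$ be an integer program and $t_L=(\ell,\varphi,\eta,\ell)\in\mathcal{T}\setminus\mathcal{T}_0$. Let $\mathcal{SB}_L$ be a size bound for a loop $L$ which corresponds to $t_L$ via a variable renaming $\pi$. Then $\pi\circ\mathcal{SB}_L\circ\pi^{-1}$ (i.e., $x\mapsto\pi(\mathcal{SB}_L(\pi^{-1}(x)))$, where $\pi$ applied to a bound renames its variables, and with the value $x$ for variables $x\in\mathcal{V}\setminus\mathcal{V}'$) is a local size bound for $t_L$ w.r.t. $\{t_L\}$.
   Context: Integer program: tuple $(\mathcal{V},\mathcal{L},\ell_0,\mathcal{T})$ with finite variables $\mathcal{V}$, finite locations $\mathcal{L}$, initial location $\ell_0$, finite set $\mathcal{T}$ of transitions $(\ell,\varphi,\eta,\ell')$ with $\ell'\ne\ell_0$, guard $\varphi$ a formula built from inequations $p>0$ ($p\in\mathbb{Q}[\mathcal{V}]$) with $\wedge,\vee$, update $\eta:\mathcal{V}\to\mathbb{Z}[\mathcal{V}]$; $\mathcal{T}_0$ = transitions starting in $\ell_0$. States $\sigma:\mathcal{V}\to\mathbb{Z}$, $|\sigma|(x)=|\sigma(x)|$. $(\ell,\sigma)\to_t(\ell',\sigma')$ for $t=(\ell,\varphi,\eta,\ell')$ if $\sigma(\varphi)$ holds and $\sigma'(v)=\sigma(\eta(v))$ for all $v$; $\to_{\mathcal{T}'}=\bigcup_{t\in\mathcal{T}'}\to_t$, $^*$ reflexive-transitive closure. Entry transitions $\mathcal{E}_{\mathcal{T}'}=\{t=(\_,\_,\_,\ell)\in\mathcal{T}\setminus\mathcal{T}'\mid\exists(\ell,\_,\_,\_)\in\mathcal{T}'\}$.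 Bounds $\mathcal{B}$: smallest set containing $\mathbb{N}\cup\{\omega\}$ and the variables, closed under $+$, $\cdot$, $k^{(\cdot)}$ ($k\in\mathbb{N}$). Local size bound for $t'\in\mathcal{T}'$ w.r.t. $\mathcal{T}'$: $\mathcal{SB}_{t'}:\mathcal{V}\to\mathcal{B}$ with $|\sigma|(\mathcal{SB}_{t'}(x))\ge\sup\{|\sigma'(x)|\mid\exists\ell',(\_,\_,\_,\ell)\in\mathcal{E}_{\mathcal{T}'}.\ (\ell,\sigma)(\to^*_{\mathcal{T}'}\circ\to_{t'})(\ell',\sigma')\}$ for all $x,\sigma$. Loop $L=(\varphi',\eta')$ over $\{x_1,\dots,x_d\}$: guard $\varphi'$ and update $\eta':\{x_1,\dots,x_d\}\to\mathbb{Z}[x_1,\dots,x_d]$; runtime complexity $\mathrm{rc}(\sigma)=\inf\{n\mid\sigma(\eta'^n(\neg\varphi'))\}$ ($\inf\emptyset=\omega$), where $\eta'^n$ is $n$-fold application (substitution); a size bound for $L$ is $\mathcal{SB}_L:\{x_1,\dots,x_d\}\to\mathcal{B}$ with $|\sigma|(\mathcal{SB}_L(x))\ge\sup\{|\sigma(\eta'^n(x))|\mid n\le\mathrm{rc}(\sigma)\}$ for all $x$ and integer states $\sigma$. Correspondence: let $t=(\ell,\varphi,\eta,\ell)$ with $\varphi\in\mathcal{F}(\mathcal{V}')$ for some $\mathcal{V}'\subseteq\mathcal{V}$, $\eta(x)=x$ for $x\in\mathcal{V}\setminus\mathcal{V}'$ and $\eta(x)\in\mathbb{Z}[\mathcal{V}']$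 for $x\in\mathcal{V}'$. A loop $(\varphi',\eta')$ over $\{x_1,\dots,x_d\}$ corresponds to $t$ via the variable renaming (bijection) $\pi:\{x_1,\dots,x_d\}\to\mathcal{V}'$ if $\varphi$ is $\pi(\varphi')$ and $\eta(\pi(x_i))=\pi(\eta'(x_i))$ for all $i$. *)

theory Defs
  imports Main "HOL-Library.Extended_Nat"
begin

datatype ('v, 'c) pexp =
    PVar 'v
  | PConst 'c
  | PAdd "('v, 'c) pexp" "('v, 'c) pexp"
  | PMul "('v, 'c) pexp" "('v, 'c) pexp"

primrec peval :: "('v \<Rightarrow> 'c::comm_ring_1) \<Rightarrow> ('v, 'c) pexp \<Rightarrow> 'c" where
  "peval s (PVar v) = s v"
| "peval s (PConst c) = c"
| "peval s (PAdd p q) = peval s p + peval s q"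
| "peval s (PMul p q) = peval s p * peval s q"

primrec pvars :: "('v, 'c) pexp \<Rightarrow> 'v set" where
  "pvars (PVar v) = {v}"
| "pvars (PConst c) = {}"
| "pvars (PAdd p q) = pvars p \<union> pvars q"
| "pvars (PMul p q) = pvars p \<union> pvars q"

primrec psubst :: "('v \<Rightarrow> ('w, 'c) pexp) \<Rightarrow> ('v, 'c) pexp \<Rightarrow> ('w, 'c) pexp" where
  "psubst f (PVar v) = f v"
| "psubst f (PConst c) = PConst c"
| "psubst f (PAdd p q) = PAdd (psubst f p) (psubst f q)"
| "psubst f (PMul p q) = PMul (psubst f p) (psubst f q)"

datatype 'v form =
    Gt "('v, rat) pexp"
  | FAnd "'v form" "'v form"
  | FOr "'v form" "'v form"

primrec fsat :: "('v \<Rightarrow> int) \<Rightarrow> 'v form \<Rightarrow> bool" where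
  "fsat s (Gt p) = (peval (\<lambda>v. of_int (s v)) p > 0)"
| "fsat s (FAnd a b) = (fsat s a \<and> fsat s b)"
| "fsat s (FOr a b) = (fsat s a \<or> fsat s b)"

primrec fvars :: "'v form \<Rightarrow> 'v set" where
  "fvars (Gt p) = pvars p"
| "fvars (FAnd a b) = fvars a \<union> fvars b"
| "fvars (FOr a b) = fvars a \<union> fvars b"

primrec fsubst :: "('v \<Rightarrow> ('v, int) pexp) \<Rightarrow> 'v form \<Rightarrow> 'v form" where
  "fsubst f (Gt p) = Gt (psubst (\<lambda>v. map_pexp id of_int (f v)) p)"
| "fsubst f (FAnd a b) = FAnd (fsubst f a) (fsubst f b)"
| "fsubst f (FOr a b) = FOr (fsubst f a) (fsubst f b)"

abbreviation prename :: "('w \<Rightarrow> 'v) \<Rightarrow> ('w, 'c) pexp \<Rightarrow> ('v, 'c) pexp" where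
  "prename \<pi> p \<equiv> map_pexp \<pi> id p"

primrec frename :: "('w \<Rightarrow> 'v) \<Rightarrow> 'w form \<Rightarrow> 'v form" where
  "frename \<pi> (Gt p) = Gt (prename \<pi> p)"
| "frename \<pi> (FAnd a b) = FAnd (frename \<pi> a) (frename \<pi> b)"
| "frename \<pi> (FOr a b) = FOr (frename \<pi> a) (frename \<pi> b)"

datatype 'v bound =
    BNat nat
  | BOmega
  | BVar 'v
  | BAdd "'v bound" "'v bound"
  | BMul "'v bound" "'v bound"
  | BPow nat "'v bound"

text \<open>Evaluation of a bound in the absolute state |s|, in extended naturals
  (omega = infinity); k^omega = omega for k >= 2, and 1 resp. 0 for k = 1 resp. 0.\<close>
primrec beval :: "('v \<Rightarrow> int) \<Rightarrow> 'v bound \<Rightarrow> enat" where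
  "beval s (BNat n) = enat n"
| "beval s BOmega = \<infinity>"
| "beval s (BVar v) = enat (nat \<bar>s v\<bar>)"
| "beval s (BAdd a b) = beval s a + beval s b"
| "beval s (BMul a b) = beval s a * beval s b"
| "beval s (BPow k b) = (case beval s b of enat m \<Rightarrow> enat (k ^ m)
                          | \<infinity> \<Rightarrow> (if k \<le> 1 then enat k else \<infinity>))"

abbreviation brename :: "('w \<Rightarrow> 'v) \<Rightarrow> 'w bound \<Rightarrow> 'v bound" where
  "brename \<pi> b \<equiv> map_bound \<pi> b"

text \<open>Variables are the (finite) type 'v, locations the (finite) type 'l.
  A transition is (source, guard, update, target).\<close>
type_synonym ('l, 'v) transition = "'l \<times> 'v form \<times> ('v \<Rightarrow> ('v, int) pexp) \<times> 'l"

definition src :: "('l, 'v) transition \<Rightarrow> 'l" where "src t = fst t"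
definition tgt :: "('l, 'v) transition \<Rightarrow> 'l" where "tgt t = snd (snd (snd t))"

definition integer_program :: "'l \<Rightarrow> ('l, 'v) transition set \<Rightarrow> bool" where
  "integer_program l0 T \<longleftrightarrow> finite T \<and> (\<forall>t\<in>T. tgt t \<noteq> l0)"

definition initial_trans :: "'l \<Rightarrow> ('l, 'v) transition set \<Rightarrow> ('l, 'v) transition set" where
  "initial_trans l0 T = {t \<in> T. src t = l0}"

definition step :: "('l, 'v) transition \<Rightarrow> (('l \<times> ('v \<Rightarrow> int)) \<times> ('l \<times> ('v \<Rightarrow> int))) set" where
  "step t = {((l, s), (l', s')). \<exists>\<phi> \<eta>. t = (l, \<phi>, \<eta>, l') \<and> fsat s \<phi> \<and>
                                    (\<forall>v. s' v = peval s (\<eta> v))}"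

definition steps :: "('l, 'v) transition set \<Rightarrow> (('l \<times> ('v \<Rightarrow> int)) \<times> ('l \<times> ('v \<Rightarrow> int))) set" where
  "steps T' = (\<Union>t\<in>T'. step t)"

definition entry_trans :: "('l, 'v) transition set \<Rightarrow> ('l, 'v) transition set \<Rightarrow> ('l, 'v) transition set" where
  "entry_trans T T' = {t \<in> T - T'. \<exists>t'\<in>T'. src t' = tgt t}"

definition local_size_bound ::
  "('l, 'v) transition set \<Rightarrow> ('l, 'v) transition set \<Rightarrow> ('l, 'v) transition \<Rightarrow> ('v \<Rightarrow> 'v bound) \<Rightarrow> bool" where
  "local_size_bound T T' t' SB \<longleftrightarrow> t' \<in> T' \<and>
     (\<forall>x s. beval s (SB x) \<ge>
        Sup {enat (nat \<bar>s' x\<bar>) | s'. \<exists>l l'. (\<exists>t\<in>entry_trans T T'. tgt t = l) \<and>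
               ((l, s), (l', s')) \<in> (steps T')\<^sup>* O step t'})"

text \<open>A loop over the variables of the finite type 'w (i.e. {x_1..x_d} = UNIV).\<close>
type_synonym 'w loop = "'w form \<times> ('w \<Rightarrow> ('w, int) pexp)"

definition rc :: "'w loop \<Rightarrow> ('w \<Rightarrow> int) \<Rightarrow> enat" where
  "rc L s = (INF n \<in> {n. \<not> fsat s ((fsubst (snd L) ^^ n) (fst L))}. enat n)"

definition loop_size_bound :: "'w loop \<Rightarrow> ('w \<Rightarrow> 'w bound) \<Rightarrow> bool" where
  "loop_size_bound L SB \<longleftrightarrow>
     (\<forall>x s. beval s (SB x) \<ge>
        Sup {enat (nat \<bar>peval s ((psubst (snd L) ^^ n) (PVar x))\<bar>) | n. enat n \<le> rc L s})"

definition corresponds ::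
  "'w loop \<Rightarrow> ('l, 'v) transition \<Rightarrow> 'v set \<Rightarrow> ('w \<Rightarrow> 'v) \<Rightarrow> bool" where
  "corresponds L t V' \<pi> \<longleftrightarrow>
     (\<exists>l \<phi> \<eta>. t = (l, \<phi>, \<eta>, l) \<and>
        fvars \<phi> \<subseteq> V' \<and>
        (\<forall>x. x \<notin> V' \<longrightarrow> \<eta> x = PVar x) \<and>
        (\<forall>x\<in>V'. pvars (\<eta> x) \<subseteq> V') \<and>
        bij_betw \<pi> UNIV V' \<and>
        \<phi> = frename \<pi> (fst L) \<and>
        (\<forall>i. \<eta> (\<pi> i) = prename \<pi> (snd L i)))"

definition lift_bound :: "'v set \<Rightarrow> ('w \<Rightarrow> 'v) \<Rightarrow> ('w \<Rightarrow> 'w bound) \<Rightarrow> 'v \<Rightarrow> 'v bound" where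
  "lift_bound V' \<pi> SB x = (if x \<in> V' then brename \<pi> (SB (the_inv_into UNIV \<pi> x)) else BVar x)"

end

theory Submission
  imports Defs
begin

lemma peval_rename: "peval s (map_pexp \<pi> id p) = peval (s \<circ> \<pi>) p"
  by (induction p) auto

lemma fsat_rename: "fsat s (frename \<pi> f) = fsat (s \<circ> \<pi>) f"
  by (induction f) (auto simp: peval_rename comp_def)

lemma peval_psubst: "peval s (psubst f p) = peval (\<lambda>v. peval s (f v)) p"
  by (induction p) auto

lemma peval_ofint: "peval (\<lambda>v. of_int (s v) :: rat) (map_pexp id of_int q) = of_int (peval s q)"
  by (induction q) auto

lemma fsat_fsubst: "fsat s (fsubst f a) = fsat (\<lambda>v. peval s (f v)) a"
  by (induction a) (auto simp: peval_psubst peval_ofint)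

lemma fsat_fsubst_pow:
  "fsat s ((fsubst f ^^ n) a) = fsat (((\<lambda>s v. peval s (f v)) ^^ n) s) a"
proof (induction n arbitrary: s)
  case 0 then show ?case by simp
next
  case (Suc n)
  have "fsat s ((fsubst f ^^ Suc n) a) = fsat s (fsubst f ((fsubst f ^^ n) a))" by simp
  also have "\<dots> = fsat (\<lambda>v. peval s (f v)) ((fsubst f ^^ n) a)" by (rule fsat_fsubst)
  also have "\<dots> = fsat (((\<lambda>s v. peval s (f v)) ^^ n) (\<lambda>v. peval s (f v))) a" by (rule Suc)
  also have "\<dots> = fsat (((\<lambda>s v. peval s (f v)) ^^ Suc n) s) a" by (simp only: funpow_Suc_right o_apply)
  finally show ?case .
qed

lemma peval_psubst_pow:
  fixes s :: "'v \<Rightarrow> 'c::comm_ring_1" and f :: "'v \<Rightarrow> ('v, 'c) pexp"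
  shows "peval s ((psubst f ^^ n) p) = peval (((\<lambda>s v. peval s (f v)) ^^ n) s) p"
proof (induction n arbitrary: s)
  case 0 then show ?case by simp
next
  case (Suc n)
  have "peval s ((psubst f ^^ Suc n) p) = peval s (psubst f ((psubst f ^^ n) p))" by simp
  also have "\<dots> = peval (\<lambda>v. peval s (f v)) ((psubst f ^^ n) p)" by (rule peval_psubst)
  also have "\<dots> = peval (((\<lambda>s v. peval s (f v)) ^^ n) (\<lambda>v. peval s (f v))) p" by (rule Suc)
  also have "\<dots> = peval (((\<lambda>s v. peval s (f v)) ^^ Suc n) s) p" by (simp only: funpow_Suc_right o_apply)
  finally show ?case .
qed

lemma beval_rename: "beval s (map_bound \<pi> b) = beval (s \<circ> \<pi>) b"
  by (induction b) auto

lemma path_lemma: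
  assumes "((a, s), (b, s1)) \<in> (step tL)\<^sup>*" and "tL = (l, \<phi>, \<eta>, l)"
  shows "\<exists>n. s1 = ((\<lambda>s v. peval s (\<eta> v)) ^^ n) s \<and>
             (\<forall>k<n. fsat (((\<lambda>s v. peval s (\<eta> v)) ^^ k) s) \<phi>)"
  using assms(1)
proof (induction "(b, s1)" arbitrary: b s1 rule: rtrancl_induct)
  case base
  then show ?case by (intro exI[of _ 0]) auto
next
  case (step y)
  obtain b0 s0 where y: "y = (b0, s0)" by (cases y)
  from step(3)[OF y] obtain n where n: "s0 = ((\<lambda>s v. peval s (\<eta> v)) ^^ n) s"
    "\<forall>k<n. fsat (((\<lambda>s v. peval s (\<eta> v)) ^^ k) s) \<phi>" by blast
  from step(2) y assms(2) have g: "fsat s0 \<phi>" and u: "s1 = (\<lambda>v. peval s0 (\<eta> v))"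
    by (auto simp: step_def)
  show ?case
    by (rule exI[of _ "Suc n"]) (use n g u less_Suc_eq in auto)
qed

theorem lemma35:
  fixes l0 :: "'l::finite"
    and T :: "('l, 'v::finite) transition set"
    and tL :: "('l, 'v) transition"
    and L :: "'w::finite loop"
    and SBL :: "'w \<Rightarrow> 'w bound"
    and V' :: "'v set"
    and \<pi> :: "'w \<Rightarrow> 'v"
  assumes "integer_program l0 T"
    and "tL \<in> T - initial_trans l0 T"
    and "corresponds L tL V' \<pi>"
    and "loop_size_bound L SBL"
  shows "local_size_bound T {tL} tL (lift_bound V' \<pi> SBL)"
proof -
  obtain l \<phi> \<eta> where tL: "tL = (l, \<phi>, \<eta>, l)" and fix_out: "\<forall>x. x \<notin> V' \<longrightarrow> \<eta> x = PVar x"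
    and bij: "bij_betw \<pi> UNIV V'" and phi: "\<phi> = frename \<pi> (fst L)"
    and eta: "\<forall>i. \<eta> (\<pi> i) = prename \<pi> (snd L i)"
    using assms(3) unfolding corresponds_def by blast
  define updP where "updP = (\<lambda>(s::'v \<Rightarrow> int) v. peval s (\<eta> v))"
  define updL where "updL = (\<lambda>(s::'w \<Rightarrow> int) v. peval s (snd L v))"
  have inj: "inj \<pi>" using bij bij_betw_def by blast
  have one: "updP g \<circ> \<pi> = updL (g \<circ> \<pi>)" for g
    by (rule ext) (simp add: updP_def updL_def eta peval_rename)
  have comm: "(updP ^^ m) s \<circ> \<pi> = (updL ^^ m) (s \<circ> \<pi>)" for m s
  proof (induction m)
    case 0 then show ?case by simp
  next
    case (Suc m)
    show ?case by (simp add: one Suc)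
  qed
  have stepsL: "steps {tL} = step tL" by (simp add: steps_def)
  have main: "enat (nat \<bar>s' x\<bar>) \<le> beval s (lift_bound V' \<pi> SBL x)"
    if "((l1, s), (l', s')) \<in> (step tL)\<^sup>* O step tL" for x s s' l1 l'
  proof -
    from that obtain b s1 where r: "((l1, s), (b, s1)) \<in> (step tL)\<^sup>*"
      and st: "((b, s1), (l', s')) \<in> step tL" by auto
    from path_lemma[OF r tL] obtain n where n: "s1 = (updP ^^ n) s"
      "\<forall>k<n. fsat ((updP ^^ k) s) \<phi>" unfolding updP_def by blast
    from st tL have g: "fsat s1 \<phi>" and u: "s' = updP s1"
      by (auto simp: step_def updP_def)
    have s': "s' = (updP ^^ Suc n) s" using n u by simp
    have allg: "fsat ((updP ^^ k) s) \<phi>" if "k \<le> n" for k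
      using n g that by (cases "k = n") auto
    show ?thesis
    proof (cases "x \<in> V'")
      case False
      have "(updP ^^ m) s x = s x" for m
        by (induction m) (auto simp: updP_def fix_out False)
      then have "s' x = s x" using s' by metis
      then show ?thesis using False by (simp add: lift_bound_def)
    next
      case True
      then obtain i where xi: "x = \<pi> i" using bij by (metis bij_betw_imp_surj_on imageE)
      have inv: "the_inv_into UNIV \<pi> x = i" using xi inj by (simp add: the_inv_into_f_f)
      define \<sigma> where "\<sigma> = s \<circ> \<pi>"
      have rc: "enat (Suc n) \<le> rc L \<sigma>"
        unfolding rc_def
      proof (rule INF_greatest)
        fix m assume "m \<in> {m. \<not> fsat \<sigma> ((fsubst (snd L) ^^ m) (fst L))}"
        then have "\<not> fsat ((updP ^^ m) s) \<phi>"
          by (simp add: fsat_fsubst_pow phi fsat_rename comm \<sigma>_def updL_def[symmetric])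
        then have "\<not> m \<le> n" using allg by blast
        then show "enat (Suc n) \<le> enat m" by simp
      qed
      have val: "s' x = peval \<sigma> ((psubst (snd L) ^^ Suc n) (PVar i))"
        by (simp only: peval_psubst_pow updL_def[symmetric] peval.simps
            \<sigma>_def comm[symmetric] s' xi o_apply)
      have "enat (nat \<bar>s' x\<bar>) \<le> Sup {enat (nat \<bar>peval \<sigma> ((psubst (snd L) ^^ n) (PVar i))\<bar>) | n. enat n \<le> rc L \<sigma>}"
        by (rule Sup_upper, rule CollectI, rule exI[of _ "Suc n"]) (simp only: rc val simp_thms)
      also have "\<dots> \<le> beval \<sigma> (SBL i)" using assms(4) unfolding loop_size_bound_def by blast
      finally show ?thesis using True inv by (simp add: lift_bound_def beval_rename \<sigma>_def)
    qed
  qed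
  show ?thesis
    unfolding local_size_bound_def stepsL
    using main by (auto intro!: Sup_least) (meson relcompI)
qed

end
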